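(* Let $n\ge1$ and let $\mathcal{Z}=\{z_1,\dots,z_m\}\subset\mathbb{D}^n$ be $m$ distinct points, and $\mathcal{Q}_{\mathcal{Z}}=\operatorname{span}\{\mathbb{S}(\cdot,z_i):i=1,\dots,m\}$. Then $\mathcal{Z}$ is a Pick set if and only if $\mathcal{Q}_{\mathcal{Z}}$ satisfies the commutant lifting property.
   Context: $\mathbb{S}(z,w)=\prod_{i=1}^n(1-z_i\bar w_i)^{-1}$ is the Szegő kernel, $\mathbb{S}(\cdot,w)(z)=\mathbb{S}(z,w)$, an element of the Hardy space $H^2(\mathbb{T}^n)$. $\mathcal{S}(\mathbb{D}^n)$ is the closed unit ball of $H^\infty(\mathbb{D}^n)$. For $w_1,\dots,w_m\in\mathbb{D}$, the Pick matrix is $\big((1-w_i\bar w_j)\mathbb{S}(z_i,z_j)\big)_{i,j=1}^m$. $\mathcal{Z}$ is a Pick set if for every $w_1,\dots,w_m\in\mathbb{D}$ whose Pick matrix is positive semidefinite there exists $\varphi\in\mathcal{S}(\mathbb{D}^n)$ with $\varphi(z_i)=w_i$ for all $i$. A quotient module $\mathcal{Q}\subseteq H^2(\mathbb{T}^n)$ (closed, invariant under all $T_{z_i}^*$) satisfies the commutant lifting property if every contraction $X\in\mathcal{B}(\mathcal{Q})$ with $XS_{z_i}=S_{z_i}X$ for all $i$ (where $S_{z_i}=P_{\mathcal{Q}}T_{z_i}|_{\mathcal{Q}}$) is of the form $X=P_{\mathcal{Q}}T_\varphi|_{\mathcal{Q}}$ for some $\varphi\in\mathcal{S}(\mathbb{D}^n)$;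 here $T_\varphi f=\varphi f$ and $P_{\mathcal{Q}}$ is the orthogonal projection onto $\mathcal{Q}$. *)

theory Defs
  imports "HOL-Analysis.Analysis"
begin

text \<open>Elements of H^2(T^n) are represented by their Taylor coefficient families
  indexed by multi-indices  alpha :: 'n => nat  (the index type 'n is finite, CARD('n) = n).
  H^2 is identified isometrically with the square-summable coefficient families.\<close>

type_synonym 'n coeffs = "('n \<Rightarrow> nat) \<Rightarrow> complex"

definition polydisc :: "(complex ^ 'n) set" where
  "polydisc = {z. \<forall>k. cmod (z $ k) < 1}"

definition mon :: "complex ^ 'n \<Rightarrow> ('n \<Rightarrow> nat) \<Rightarrow> complex" where
  "mon z \<alpha> = (\<Prod>k\<in>UNIV. (z $ k) ^ \<alpha> k)"

text \<open>c is the Taylor coefficient family of phi on the polydisc (holomorphy on D^n).\<close>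
definition pw_series :: "'n coeffs \<Rightarrow> (complex ^ 'n \<Rightarrow> complex) \<Rightarrow> bool" where
  "pw_series c \<phi> \<longleftrightarrow> (\<forall>z\<in>polydisc. ((\<lambda>\<alpha>. c \<alpha> * mon z \<alpha>) has_sum \<phi> z) UNIV)"

definition schur :: "(complex ^ 'n \<Rightarrow> complex) \<Rightarrow> bool" where
  "schur \<phi> \<longleftrightarrow> (\<exists>c. pw_series c \<phi>) \<and> (\<forall>z\<in>polydisc. cmod (\<phi> z) \<le> 1)"

definition h2_inner :: "'n coeffs \<Rightarrow> 'n coeffs \<Rightarrow> complex" where
  "h2_inner f g = infsum (\<lambda>\<alpha>. f \<alpha> * cnj (g \<alpha>)) UNIV"

definition h2_norm :: "'n coeffs \<Rightarrow> real" where
  "h2_norm f = sqrt (infsum (\<lambda>\<alpha>. (cmod (f \<alpha>))\<^sup>2) UNIV)"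

definition szego_kernel :: "complex ^ 'n \<Rightarrow> complex ^ 'n \<Rightarrow> complex" where
  "szego_kernel z w = (\<Prod>k\<in>UNIV. inverse (1 - z $ k * cnj (w $ k)))"

definition szego :: "complex ^ 'n \<Rightarrow> 'n coeffs" where
  "szego w = (\<lambda>\<alpha>. \<Prod>k\<in>UNIV. cnj (w $ k) ^ \<alpha> k)"

definition QZ :: "nat \<Rightarrow> (nat \<Rightarrow> complex ^ 'n) \<Rightarrow> 'n coeffs set" where
  "QZ m z = {f. \<exists>a. f = (\<lambda>\<alpha>. \<Sum>i<m. a i * szego (z i) \<alpha>)}"

definition proj :: "'n coeffs set \<Rightarrow> 'n coeffs \<Rightarrow> 'n coeffs" where
  "proj Q g = (THE q. q \<in> Q \<and> (\<forall>k\<in>Q. h2_inner (\<lambda>\<alpha>. g \<alpha> - q \<alpha>) k = 0))"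

definition toep :: "('n::finite) coeffs \<Rightarrow> 'n coeffs \<Rightarrow> 'n coeffs" where
  "toep c f = (\<lambda>\<alpha>. \<Sum>\<beta>\<in>{\<beta>. \<forall>k. \<beta> k \<le> \<alpha> k}. c \<beta> * f (\<lambda>k. \<alpha> k - \<beta> k))"

definition zcoef :: "'n \<Rightarrow> 'n coeffs" where
  "zcoef k = (\<lambda>\<alpha>. if \<alpha> = (\<lambda>j. if j = k then 1 else 0) then 1 else 0)"

definition compr :: "('n::finite) coeffs set \<Rightarrow> 'n \<Rightarrow> 'n coeffs \<Rightarrow> 'n coeffs" where
  "compr Q k f = proj Q (toep (zcoef k) f)"

definition contraction_on :: "'n coeffs set \<Rightarrow> ('n coeffs \<Rightarrow> 'n coeffs) \<Rightarrow> bool" where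
  "contraction_on Q X \<longleftrightarrow>
     (\<forall>f\<in>Q. X f \<in> Q) \<and>
     (\<forall>f\<in>Q. \<forall>g\<in>Q. X (\<lambda>\<alpha>. f \<alpha> + g \<alpha>) = (\<lambda>\<alpha>. X f \<alpha> + X g \<alpha>)) \<and>
     (\<forall>f\<in>Q. \<forall>a. X (\<lambda>\<alpha>. a * f \<alpha>) = (\<lambda>\<alpha>. a * X f \<alpha>)) \<and>
     (\<forall>f\<in>Q. h2_norm (X f) \<le> h2_norm f)"

definition commutant_lifting :: "('n::finite) coeffs set \<Rightarrow> bool" where
  "commutant_lifting Q \<longleftrightarrow>
     (\<forall>X. contraction_on Q X \<and> (\<forall>k. \<forall>f\<in>Q. X (compr Q k f) = compr Q k (X f)) \<longrightarrow>
        (\<exists>\<phi> c. schur \<phi> \<and> pw_series c \<phi> \<and> (\<forall>f\<in>Q. X f = proj Q (toep c f))))"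

definition pick_psd :: "nat \<Rightarrow> (nat \<Rightarrow> complex ^ 'n) \<Rightarrow> (nat \<Rightarrow> complex) \<Rightarrow> bool" where
  "pick_psd m z w \<longleftrightarrow>
     (\<forall>v :: nat \<Rightarrow> complex.
        let s = (\<Sum>i<m. \<Sum>j<m. cnj (v i) * ((1 - w i * cnj (w j)) * szego_kernel (z i) (z j)) * v j)
        in Im s = 0 \<and> Re s \<ge> 0)"

definition pick_set :: "nat \<Rightarrow> (nat \<Rightarrow> complex ^ 'n) \<Rightarrow> bool" where
  "pick_set m z \<longleftrightarrow>
     (\<forall>w. (\<forall>i<m. cmod (w i) < 1) \<and> pick_psd m z w \<longrightarrow>
        (\<exists>\<phi>. schur \<phi> \<and> (\<forall>i<m. \<phi> (z i) = w i)))"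

end

theory Submission
  imports Defs
begin

lemma has_sum_sum_fin:
  fixes f :: "'i \<Rightarrow> 'a \<Rightarrow> complex"
  assumes "finite I" "\<And>i. i \<in> I \<Longrightarrow> (f i has_sum s i) A"
  shows "((\<lambda>x. \<Sum>i\<in>I. f i x) has_sum (\<Sum>i\<in>I. s i)) A"
  using assms
proof (induction I rule: finite_induct)
  case empty then show ?case by simp
next
  case (insert i I)
  then show ?case by (simp add: has_sum_add)
qed

lemma has_sum_diff':
  fixes f g :: "'a \<Rightarrow> complex"
  assumes "(f has_sum a) A" "(g has_sum b) A"
  shows "((\<lambda>x. f x - g x) has_sum (a - b)) A"
proof -
  have "((\<lambda>x. - g x) has_sum - b) A" using has_sum_uminus[of g A "- b"] assms(2) by simp
  from has_sum_add[OF assms(1) this] show ?thesis by simp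
qed

lemma geo_has_sum:
  fixes x :: complex
  assumes "norm x < 1"
  shows "((\<lambda>j::nat. x ^ j) has_sum inverse (1 - x)) UNIV"
    and "(\<lambda>j::nat. norm (x ^ j)) summable_on UNIV"
proof -
  have s: "summable (\<lambda>n. norm (x ^ n))"
    using assms by (simp add: norm_power summable_geometric)
  show "((\<lambda>j::nat. x ^ j) has_sum inverse (1 - x)) UNIV"
    using norm_summable_imp_has_sum[OF s geometric_sums[OF assms]] by (simp add: field_simps)
  show "(\<lambda>j::nat. norm (x ^ j)) summable_on UNIV"
    by (rule norm_summable_imp_summable_on) (use s in simp)
qed

lemma mon_has_sum:
  fixes u :: "complex ^ 'n"
  assumes "\<And>k. norm (u $ k) < 1"
  shows "((\<lambda>\<alpha>. mon u \<alpha>) has_sum (\<Prod>k\<in>UNIV. inverse (1 - u $ k))) UNIV"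
    and "(\<lambda>\<alpha>. norm (mon u \<alpha>)) summable_on UNIV"
proof -
  define f where "f k j = (u $ k) ^ j" for k j
  have m: "mon u = (\<lambda>g. \<Prod>k\<in>UNIV. f k (g k))"
    by (simp add: mon_def f_def fun_eq_iff)
  have fa: "Infinite_Set_Sum.abs_summable_on (f k) UNIV" for k
    using geo_has_sum(2)[OF assms[of k]] abs_summable_equivalent unfolding f_def by blast
  have "Infinite_Set_Sum.abs_summable_on (\<lambda>g. \<Prod>k\<in>UNIV. f k (g k)) (PiE UNIV (\<lambda>_. UNIV))"
    by (rule abs_summable_on_prod_PiE) (use fa in auto)
  then have ns: "(\<lambda>\<alpha>. norm (mon u \<alpha>)) summable_on UNIV"
    using abs_summable_equivalent m by (metis PiE_UNIV)
  then show "(\<lambda>\<alpha>. norm (mon u \<alpha>)) summable_on UNIV" .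
  have fa2: "(\<lambda>j. norm (f k j)) summable_on UNIV" for k
    using geo_has_sum(2)[OF assms[of k]] unfolding f_def .
  have "infsum (\<lambda>g. \<Prod>k\<in>UNIV. f k (g k)) (PiE UNIV (\<lambda>_. UNIV)) = (\<Prod>k\<in>UNIV. infsum (f k) UNIV)"
    by (rule infsum_prod_PiE_abs) (use fa2 in auto)
  also have "(\<Prod>k\<in>UNIV. infsum (f k) UNIV) = (\<Prod>k\<in>UNIV. inverse (1 - u $ k))"
    using geo_has_sum(1)[OF assms] unfolding f_def by (intro prod.cong) (auto simp: infsumI)
  finally have "infsum (mon u) UNIV = (\<Prod>k\<in>UNIV. inverse (1 - u $ k))"
    by (simp add: m)
  moreover have "mon u summable_on UNIV"
    using ns abs_summable_summable by blast
  ultimately show "((\<lambda>\<alpha>. mon u \<alpha>) has_sum (\<Prod>k\<in>UNIV. inverse (1 - u $ k))) UNIV"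
    by (metis has_sum_infsum)
qed


lemma finite_below: "finite {\<beta>::'n::finite \<Rightarrow> nat. \<forall>k. \<beta> k \<le> \<alpha> k}"
proof (rule finite_subset[of _ "PiE UNIV (\<lambda>k. {..\<alpha> k})"])
  show "finite (PiE UNIV (\<lambda>k. {..\<alpha> k}))" by (rule finite_PiE) auto
qed auto

lemma cauchy_multi:
  fixes A B :: "('n::finite \<Rightarrow> nat) \<Rightarrow> complex"
  assumes hA: "(A has_sum a) UNIV" and hB: "(B has_sum b) UNIV"
  shows "((\<lambda>\<alpha>. \<Sum>\<beta>\<in>{\<beta>. \<forall>k. \<beta> k \<le> \<alpha> k}. A \<beta> * B (\<lambda>k. \<alpha> k - \<beta> k)) has_sum (a * b)) UNIV"
proof -
  have nA: "(\<lambda>\<beta>. norm (A \<beta>)) summable_on UNIV"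
    using hA summable_on_iff_abs_summable_on_complex summable_on_def by blast
  have nB: "(\<lambda>\<beta>. norm (B \<beta>)) summable_on UNIV"
    using hB summable_on_iff_abs_summable_on_complex summable_on_def by blast
  define P where "P = (\<lambda>(\<beta>::'n\<Rightarrow>nat, \<gamma>::'n\<Rightarrow>nat). A \<beta> * B \<gamma>)"
  have "(\<lambda>x. norm (P x)) summable_on Sigma UNIV (\<lambda>_. UNIV)"
  proof (rule Infinite_Sum.abs_summable_on_Sigma_iff[where f=P and A=UNIV and B="\<lambda>_. UNIV", THEN iffD2], intro conjI ballI)
    fix x :: "'n \<Rightarrow> nat"
    show "(\<lambda>y. norm (P (x, y))) summable_on UNIV"
      unfolding P_def using nB by (simp add: norm_mult summable_on_cmult_right)
  next
    have "(\<lambda>x. norm (A x) * infsum (\<lambda>y. norm (B y)) UNIV) summable_on UNIV"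
      using nA by (rule summable_on_cmult_left)
    moreover have "norm (infsum (\<lambda>y. norm (P (x, y))) UNIV) = norm (A x) * infsum (\<lambda>y. norm (B y)) UNIV" for x
      unfolding P_def by (simp add: norm_mult infsum_cmult_right' infsum_nonneg)
    ultimately show "(\<lambda>x. norm (infsum (\<lambda>y. norm (P (x, y))) UNIV)) summable_on UNIV"
      by simp
  qed
  then have sP: "P summable_on UNIV \<times> UNIV"
    using abs_summable_summable by fastforce
  have "infsum (\<lambda>x. infsum (\<lambda>y. P (x, y)) UNIV) UNIV = infsum (\<lambda>(x,y). P (x, y)) (Sigma UNIV (\<lambda>_. UNIV))"
    by (rule infsum_Sigma'_banach) (use sP in simp)
  moreover have "infsum (\<lambda>y. P (x, y)) UNIV = A x * b" for x
    unfolding P_def using hB by (simp add: infsum_cmult_right' infsumI)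
  moreover have "infsum (\<lambda>x. A x * b) UNIV = a * b"
    using hA by (simp add: infsum_cmult_left' infsumI)
  ultimately have "infsum P (UNIV \<times> UNIV) = a * b" by simp
  with sP have hP: "(P has_sum a * b) (UNIV \<times> UNIV)"
    by (metis has_sum_infsum)
  define S where "S = Sigma (UNIV :: ('n \<Rightarrow> nat) set) (\<lambda>\<alpha>. {\<beta>. \<forall>k. \<beta> k \<le> \<alpha> k})"
  have hS: "((\<lambda>(\<alpha>, \<beta>). A \<beta> * B (\<lambda>k. \<alpha> k - \<beta> k)) has_sum a * b) S"
  proof -
    have "((\<lambda>(\<alpha>, \<beta>). A \<beta> * B (\<lambda>k. \<alpha> k - \<beta> k)) has_sum a * b) S = (P has_sum a * b) (UNIV \<times> UNIV)"
      by (rule has_sum_reindex_bij_witness[where j = "\<lambda>(\<alpha>, \<beta>). (\<beta>, \<lambda>k. \<alpha> k - \<beta> k)"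
            and i = "\<lambda>(\<beta>, \<gamma>). (\<lambda>k. \<beta> k + \<gamma> k, \<beta>)"])
         (auto simp: S_def P_def fun_eq_iff)
    with hP show ?thesis by simp
  qed
  show ?thesis
  proof (rule has_sum_Sigma'[where f = "\<lambda>(\<alpha>, \<beta>). A \<beta> * B (\<lambda>k. \<alpha> k - \<beta> k)"
        and B = "\<lambda>\<alpha>. {\<beta>. \<forall>k. \<beta> k \<le> \<alpha> k}"])
    show "((\<lambda>(\<alpha>, \<beta>). A \<beta> * B (\<lambda>k. \<alpha> k - \<beta> k)) has_sum a * b) (Sigma UNIV (\<lambda>\<alpha>. {\<beta>. \<forall>k. \<beta> k \<le> \<alpha> k}))"
      using hS S_def by simp
  next
    fix x :: "'n \<Rightarrow> nat"
    show "((\<lambda>y. case (x, y) of (\<alpha>, \<beta>) \<Rightarrow> A \<beta> * B (\<lambda>k. \<alpha> k - \<beta> k)) has_sum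
          (\<Sum>\<beta>\<in>{\<beta>. \<forall>k. \<beta> k \<le> x k}. A \<beta> * B (\<lambda>k. x k - \<beta> k))) {\<beta>. \<forall>k. \<beta> k \<le> x k}"
      using finite_below[of x] by simp
  qed
qed

lemma mon_split:
  assumes "\<forall>k. \<beta> k \<le> \<alpha> k"
  shows "mon u \<alpha> = mon u \<beta> * mon u (\<lambda>k. \<alpha> k - \<beta> k)"
proof -
  have "mon u \<alpha> = (\<Prod>k\<in>UNIV. (u $ k) ^ \<beta> k * (u $ k) ^ (\<alpha> k - \<beta> k))"
    unfolding mon_def using assms by (intro prod.cong refl) (simp flip: power_add)
  then show ?thesis by (simp add: mon_def prod.distrib)
qed

lemma toep_has_sum:
  assumes "((\<lambda>\<beta>. c \<beta> * mon u \<beta>) has_sum p) UNIV" "((\<lambda>\<gamma>. f \<gamma> * mon u \<gamma>) has_sum q) UNIV"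
  shows "((\<lambda>\<alpha>. toep c f \<alpha> * mon u \<alpha>) has_sum (p * q)) UNIV"
proof -
  have "toep c f \<alpha> * mon u \<alpha> = (\<Sum>\<beta>\<in>{\<beta>. \<forall>k. \<beta> k \<le> \<alpha> k}. (c \<beta> * mon u \<beta>) * (f (\<lambda>k. \<alpha> k - \<beta> k) * mon u (\<lambda>k. \<alpha> k - \<beta> k)))" for \<alpha>
    unfolding toep_def sum_distrib_right
    by (intro sum.cong refl) (auto simp: mon_split[of _ \<alpha> u])
  then show ?thesis
    using cauchy_multi[OF assms] by simp
qed


definition ev :: "('n::finite) coeffs \<Rightarrow> complex ^ 'n \<Rightarrow> complex" where
  "ev g u = infsum (\<lambda>\<alpha>. g \<alpha> * mon u \<alpha>) UNIV"

lemma polydiscD: "u \<in> polydisc \<Longrightarrow> norm (u $ k) < 1"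
  by (simp add: polydisc_def)

lemma cnj_szego: "cnj (szego w \<alpha>) = mon w \<alpha>"
  by (simp add: szego_def mon_def)

lemma kern_has_sum:
  fixes u w :: "complex ^ 'n::finite"
  assumes "w \<in> polydisc" "u \<in> polydisc"
  shows "((\<lambda>\<alpha>. szego w \<alpha> * mon u \<alpha>) has_sum szego_kernel u w) UNIV"
proof -
  define v :: "complex ^ 'n" where "v = (\<chi> k. cnj (w $ k) * u $ k)"
  have v: "norm (v $ k) < 1" for k
  proof -
    have "norm (v $ k) = norm (w $ k) * norm (u $ k)" by (simp add: v_def norm_mult)
    also have "\<dots> \<le> 1 * norm (u $ k)"
      using polydiscD[OF assms(1), of k] by (intro mult_right_mono) auto
    also have "\<dots> < 1" using polydiscD[OF assms(2), of k] by simp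
    finally show ?thesis .
  qed
  have "szego w \<alpha> * mon u \<alpha> = mon v \<alpha>" for \<alpha>
    by (simp add: szego_def mon_def v_def power_mult_distrib prod.distrib)
  moreover have "(\<Prod>k\<in>UNIV. inverse (1 - v $ k)) = szego_kernel u w"
    by (simp add: szego_kernel_def v_def mult.commute)
  ultimately show ?thesis
    using mon_has_sum(1)[OF v] by simp
qed

lemma szego_upd: "szego w (\<alpha>(k := Suc (\<alpha> k))) = cnj (w $ k) * szego w \<alpha>"
proof -
  have "szego w (\<alpha>(k := Suc (\<alpha> k))) = (\<Prod>l\<in>UNIV. cnj (w $ l) ^ (\<alpha> l) * (if l = k then cnj (w $ l) else 1))"
    unfolding szego_def by (intro prod.cong) auto
  also have "\<dots> = szego w \<alpha> * cnj (w $ k)"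
    by (simp add: prod.distrib szego_def)
  finally show ?thesis by simp
qed

lemma szego_0: "szego w (\<lambda>_. 0) = 1"
  by (simp add: szego_def)

lemma zcoef_has_sum: "((\<lambda>\<beta>. zcoef k \<beta> * mon u \<beta>) has_sum u $ k) UNIV"
proof -
  define ek where "ek = (\<lambda>j. if j = k then 1 else (0::nat))"
  have "mon u ek = u $ k"
  proof -
    have "mon u ek = (\<Prod>l\<in>UNIV. if l = k then u $ l else 1)"
      unfolding mon_def ek_def by (intro prod.cong) auto
    then show ?thesis by simp
  qed
  then show ?thesis
    by (intro has_sum_finite_neutralI[of "{ek}"]) (auto simp: zcoef_def ek_def)
qed

lemma has_sum_eq_infsum: "(f has_sum s) A \<Longrightarrow> infsum f A = (s::complex)"
  by (rule infsumI)

definition injK :: "nat \<Rightarrow> (nat \<Rightarrow> nat \<Rightarrow> 'a::field) \<Rightarrow> bool" where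
  "injK m K \<longleftrightarrow> (\<forall>a. (\<forall>i<m. (\<Sum>j<m. K i j * a j) = 0) \<longrightarrow> (\<forall>j<m. a j = 0))"

definition surjK :: "nat \<Rightarrow> (nat \<Rightarrow> nat \<Rightarrow> 'a::field) \<Rightarrow> bool" where
  "surjK m K \<longleftrightarrow> (\<forall>b. \<exists>a. \<forall>i<m. (\<Sum>j<m. K i j * a j) = b i)"

lemma Kp_sum:
  fixes K :: "nat \<Rightarrow> nat \<Rightarrow> 'a::field"
  shows "(\<Sum>j<m. (K i j - K i m * K m j / K m m) * a j) =
         (\<Sum>j<m. K i j * a j) - K i m / K m m * (\<Sum>j<m. K m j * a j)"
  by (simp add: sum_subtractf sum_distrib_left algebra_simps)

lemma upd_sum:
  fixes K :: "nat \<Rightarrow> nat \<Rightarrow> 'a::field"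
  shows "(\<Sum>j<Suc m. K i j * (a(m := c)) j) = (\<Sum>j<m. K i j * a j) + K i m * c"
proof -
  have "(\<Sum>j<m. K i j * (a(m := c)) j) = (\<Sum>j<m. K i j * a j)" by (intro sum.cong) auto
  then show ?thesis by (simp add: sum.lessThan_Suc)
qed

lemma injKD:
  assumes "injK m K" "\<forall>i<m. (\<Sum>j<m. K i j * a j) = 0" "j < m"
  shows "a j = 0"
  using assms unfolding injK_def by blast

lemma solve_step:
  fixes K :: "nat \<Rightarrow> nat \<Rightarrow> 'a::field"
  assumes IH: "\<And>K'::nat \<Rightarrow> nat \<Rightarrow> 'a. injK m K' \<Longrightarrow> surjK m K'"
    and inj: "injK (Suc m) K" and piv: "K m m \<noteq> 0"
  shows "surjK (Suc m) K"
proof -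
  define K' where "K' i j = K i j - K i m * K m j / K m m" for i j
  have ks: "(\<Sum>j<m. K' i j * a j) = (\<Sum>j<m. K i j * a j) - K i m / K m m * (\<Sum>j<m. K m j * a j)" for i a
    unfolding K'_def by (rule Kp_sum)
  have "injK m K'"
    unfolding injK_def
  proof (rule allI, rule impI)
    fix a assume h: "\<forall>i<m. (\<Sum>j<m. K' i j * a j) = 0"
    define c where "c = - (\<Sum>j<m. K m j * a j) / K m m"
    have "\<forall>i<Suc m. (\<Sum>j<Suc m. K i j * (a(m := c)) j) = 0"
    proof (intro allI impI)
      fix i assume "i < Suc m"
      then consider "i < m" | "i = m" by linarith
      then show "(\<Sum>j<Suc m. K i j * (a(m := c)) j) = 0"
      proof cases
        case 1
        have e: "K i m * c = - (K i m / K m m * (\<Sum>j<m. K m j * a j))"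
          by (simp add: c_def)
        from 1 h ks[of i a] show ?thesis
          unfolding upd_sum e by simp
      next
        case 2
        then show ?thesis by (simp add: upd_sum c_def piv)
      qed
    qed
    note hh = this
    show "\<forall>j<m. a j = 0"
    proof (rule allI, rule impI)
      fix j assume j: "j < m"
      have "(a(m := c)) j = 0" by (rule injKD[OF inj hh]) (use j in simp)
      then show "a j = 0" using j by simp
    qed
  qed
  with IH have sK': "surjK m K'" by blast
  show ?thesis
    unfolding surjK_def
  proof
    fix b :: "nat \<Rightarrow> 'a"
    obtain a where a: "\<forall>i<m. (\<Sum>j<m. K' i j * a j) = b i - K i m * b m / K m m"
      using sK'[unfolded surjK_def, rule_format, of "\<lambda>i. b i - K i m * b m / K m m"] by blast
    define c where "c = (b m - (\<Sum>j<m. K m j * a j)) / K m m"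
    have "\<forall>i<Suc m. (\<Sum>j<Suc m. K i j * (a(m := c)) j) = b i"
    proof (intro allI impI)
      fix i assume "i < Suc m"
      then consider "i < m" | "i = m" by linarith
      then show "(\<Sum>j<Suc m. K i j * (a(m := c)) j) = b i"
      proof cases
        case 1
        have e: "K i m * c = K i m * b m / K m m - K i m / K m m * (\<Sum>j<m. K m j * a j)"
          by (simp add: c_def right_diff_distrib diff_divide_distrib)
        from 1 a ks[of i a] have "b i - K i m * b m / K m m = (\<Sum>j<m. K i j * a j) - K i m * (\<Sum>j<m. K m j * a j) / K m m"
          by simp
        then show ?thesis
          unfolding upd_sum e by (simp add: algebra_simps)
      next
        case 2
        then show ?thesis by (simp add: upd_sum c_def piv)
      qed
    qed
    then show "\<exists>a. \<forall>i<Suc m. (\<Sum>j<Suc m. K i j * a j) = b i" by blast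
  qed
qed

lemma solve_sys:
  fixes K :: "nat \<Rightarrow> nat \<Rightarrow> 'a::field"
  shows "injK m K \<Longrightarrow> surjK m K"
proof (induction m arbitrary: K)
  case 0
  then show ?case by (simp add: surjK_def)
next
  case (Suc m)
  have "\<exists>p<Suc m. K p m \<noteq> 0"
  proof (rule ccontr)
    assume "\<not> ?thesis"
    then have z: "\<forall>i<Suc m. K i m = 0" by auto
    have zz: "\<forall>i<Suc m. (\<Sum>j<Suc m. K i j * ((\<lambda>_. 0)(m := 1)) j) = 0"
      using z by (simp add: upd_sum)
    have "((\<lambda>_. 0)(m := 1)) m = (0::'a)" by (rule injKD[OF Suc.prems zz]) simp
    then show False by simp
  qed
  then obtain p where p: "p < Suc m" "K p m \<noteq> 0" by blast
  define \<sigma> where "\<sigma> i = (if i = p then m else if i = m then p else i)" for i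
  have \<sigma>\<sigma>: "\<sigma> (\<sigma> i) = i" for i by (simp add: \<sigma>_def)
  have \<sigma>lt: "i < Suc m \<Longrightarrow> \<sigma> i < Suc m" for i using p by (simp add: \<sigma>_def)
  define K1 where "K1 i j = K (\<sigma> i) j" for i j
  have "injK (Suc m) K1"
    unfolding injK_def
  proof (rule allI, rule impI)
    fix a assume h: "\<forall>i<Suc m. (\<Sum>j<Suc m. K1 i j * a j) = 0"
    have "\<forall>i<Suc m. (\<Sum>j<Suc m. K i j * a j) = 0"
    proof (intro allI impI)
      fix i assume i: "i < Suc m"
      from h[rule_format, OF \<sigma>lt[OF i]] have "(\<Sum>j<Suc m. K1 (\<sigma> i) j * a j) = 0" .
      then show "(\<Sum>j<Suc m. K i j * a j) = 0" by (simp add: K1_def \<sigma>\<sigma>)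
    qed
    note hh = this
    show "\<forall>j<Suc m. a j = 0" using injKD[OF Suc.prems hh] by blast
  qed
  moreover have "K1 m m = K p m" by (cases "m = p") (simp_all add: K1_def \<sigma>_def)
  then have "K1 m m \<noteq> 0" using p by simp
  ultimately have "surjK (Suc m) K1"
  proof (intro solve_step)
    show "\<And>K'::nat \<Rightarrow> nat \<Rightarrow> 'a. injK m K' \<Longrightarrow> surjK m K'" using Suc.IH by blast
  qed
  then have s: "\<forall>b. \<exists>a. \<forall>i<Suc m. (\<Sum>j<Suc m. K1 i j * a j) = b i"
    unfolding surjK_def .
  show ?case
    unfolding surjK_def
  proof
    fix b :: "nat \<Rightarrow> 'a"
    obtain a where a: "\<forall>i<Suc m. (\<Sum>j<Suc m. K1 i j * a j) = b (\<sigma> i)"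
      using s[rule_format, of "\<lambda>i. b (\<sigma> i)"] by blast
    have "\<forall>i<Suc m. (\<Sum>j<Suc m. K i j * a j) = b i"
    proof (intro allI impI)
      fix i assume i: "i < Suc m"
      from a[rule_format, OF \<sigma>lt[OF i]] have "(\<Sum>j<Suc m. K1 (\<sigma> i) j * a j) = b (\<sigma> (\<sigma> i))" .
      then show "(\<Sum>j<Suc m. K i j * a j) = b i" by (simp add: K1_def \<sigma>\<sigma>)
    qed
    then show "\<exists>a. \<forall>i<Suc m. (\<Sum>j<Suc m. K i j * a j) = b i" by blast
  qed
qed


locale pk =
  fixes m :: nat and z :: "nat \<Rightarrow> complex ^ 'n::finite"
  assumes zin: "\<And>i. i < m \<Longrightarrow> z i \<in> polydisc"
    and zinj: "inj_on z {..<m}"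
begin

definition E :: "(nat \<Rightarrow> complex) \<Rightarrow> 'n coeffs" where
  "E a = (\<lambda>\<alpha>. \<Sum>i<m. a i * szego (z i) \<alpha>)"

definition K :: "nat \<Rightarrow> nat \<Rightarrow> complex" where
  "K i j = szego_kernel (z i) (z j)"

definition G :: "(nat \<Rightarrow> complex) \<Rightarrow> (nat \<Rightarrow> complex) \<Rightarrow> complex" where
  "G a b = (\<Sum>i<m. cnj (b i) * (\<Sum>j<m. K i j * a j))"

lemma QZ_eq: "QZ m z = range E"
  by (auto simp: QZ_def E_def)

lemma E_has_sum:
  assumes "u \<in> polydisc"
  shows "((\<lambda>\<alpha>. E a \<alpha> * mon u \<alpha>) has_sum (\<Sum>j<m. a j * szego_kernel u (z j))) UNIV"
proof -
  have "E a \<alpha> * mon u \<alpha> = (\<Sum>j<m. a j * (szego (z j) \<alpha> * mon u \<alpha>))" for \<alpha>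
    by (simp add: E_def sum_distrib_right mult.assoc)
  moreover have "((\<lambda>\<alpha>. \<Sum>j<m. a j * (szego (z j) \<alpha> * mon u \<alpha>)) has_sum (\<Sum>j<m. a j * szego_kernel u (z j))) UNIV"
    by (rule has_sum_sum_fin) (auto intro!: has_sum_cmult_right kern_has_sum zin assms)
  ultimately show ?thesis by simp
qed

lemma E_has_sum_z:
  assumes "i < m"
  shows "((\<lambda>\<alpha>. E a \<alpha> * mon (z i) \<alpha>) has_sum (\<Sum>j<m. K i j * a j)) UNIV"
  using E_has_sum[OF zin[OF assms], of a] by (simp add: K_def mult.commute)

lemma ev_E: "i < m \<Longrightarrow> ev (E a) (z i) = (\<Sum>j<m. K i j * a j)"
  unfolding ev_def by (rule infsumI) (rule E_has_sum_z)

lemma inner_gen: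
  assumes "\<And>i. i < m \<Longrightarrow> ((\<lambda>\<alpha>. g \<alpha> * mon (z i) \<alpha>) has_sum e i) UNIV"
  shows "((\<lambda>\<alpha>. g \<alpha> * cnj (E b \<alpha>)) has_sum (\<Sum>i<m. cnj (b i) * e i)) UNIV"
proof -
  have "g \<alpha> * cnj (E b \<alpha>) = (\<Sum>i<m. cnj (b i) * (g \<alpha> * mon (z i) \<alpha>))" for \<alpha>
    by (simp add: E_def sum_distrib_left cnj_szego mult.commute mult.left_commute)
  moreover have "((\<lambda>\<alpha>. \<Sum>i<m. cnj (b i) * (g \<alpha> * mon (z i) \<alpha>)) has_sum (\<Sum>i<m. cnj (b i) * e i)) UNIV"
    by (rule has_sum_sum_fin) (auto intro!: has_sum_cmult_right assms)
  ultimately show ?thesis by simp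
qed

lemma EE: "((\<lambda>\<alpha>. E a \<alpha> * cnj (E b \<alpha>)) has_sum G a b) UNIV"
  unfolding G_def by (rule inner_gen) (rule E_has_sum_z)

lemma h2_inner_E: "h2_inner (E a) (E b) = G a b"
  unfolding h2_inner_def by (rule infsumI) (rule EE)

lemma G_norm:
  shows "((\<lambda>\<alpha>. (norm (E a \<alpha>))\<^sup>2) has_sum Re (G a a)) UNIV"
    and "Im (G a a) = 0" and "Re (G a a) \<ge> 0"
    and "h2_norm (E a) = sqrt (Re (G a a))"
proof -
  have eq: "E a \<alpha> * cnj (E a \<alpha>) = of_real ((norm (E a \<alpha>))\<^sup>2)" for \<alpha>
    by (rule complex_norm_square[symmetric])
  have h: "((\<lambda>\<alpha>. of_real ((norm (E a \<alpha>))\<^sup>2) :: complex) has_sum G a a) UNIV"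
    using EE[of a a] eq by simp
  from has_sum_Re[OF h] show h1: "((\<lambda>\<alpha>. (norm (E a \<alpha>))\<^sup>2) has_sum Re (G a a)) UNIV" by simp
  from has_sum_Im[OF h] have "((\<lambda>\<alpha>::'n\<Rightarrow>nat. 0::real) has_sum Im (G a a)) UNIV" by simp
  from has_sum_unique[OF this has_sum_0_simp] show "Im (G a a) = 0" .
  show "Re (G a a) \<ge> 0" by (rule has_sum_nonneg[OF h1]) simp
  show "h2_norm (E a) = sqrt (Re (G a a))"
    unfolding h2_norm_def infsumI[OF h1] ..
qed

lemma G_zero:
  assumes "G a a = 0"
  shows "E a \<alpha> = 0"
proof -
  have "(norm (E a \<alpha>))\<^sup>2 = 0"
    by (rule nonneg_has_sum_le_0D[OF G_norm(1)[of a]]) (simp_all add: assms)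
  then show ?thesis by simp
qed

lemma K_cnj: "cnj (K i j) = K j i"
  by (simp add: K_def szego_kernel_def mult.commute)

lemma G_herm: "G b a = cnj (G a b)"
proof -
  have 1: "G b a = (\<Sum>i<m. \<Sum>j<m. cnj (a i) * K i j * b j)"
    by (simp add: G_def sum_distrib_left mult.assoc)
  have 2: "cnj (G a b) = (\<Sum>i<m. \<Sum>j<m. cnj (a j) * K j i * b i)"
    by (simp add: G_def sum_distrib_left K_cnj mult_ac)
  show ?thesis unfolding 1 2 by (rule sum.swap)
qed


lemma sum_delta_cnj:
  assumes "i < m"
  shows "(\<Sum>l<m. cnj (if l = i then 1 else 0) * x l) = (x i :: complex)"
proof -
  have "(\<Sum>l<m. cnj (if l = i then 1 else 0) * x l) = (\<Sum>l<m. if l = i then x l else 0)"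
    by (rule sum.cong) auto
  then show ?thesis using assms by simp
qed

lemma E_diff: "E (\<lambda>j. a j - b j) = (\<lambda>\<alpha>. E a \<alpha> - E b \<alpha>)"
  by (simp add: E_def fun_eq_iff sum_subtractf algebra_simps)

lemma indep_step:
  assumes "\<forall>\<alpha>. (\<Sum>j<m. b j * szego (z j) \<alpha>) = 0"
  shows "\<forall>\<alpha>. (\<Sum>j<m. b j * (cnj (z j $ k) - c) * szego (z j) \<alpha>) = 0"
proof
  fix \<alpha> :: "'n \<Rightarrow> nat"
  have "(\<Sum>j<m. b j * (cnj (z j $ k) - c) * szego (z j) \<alpha>) =
        (\<Sum>j<m. b j * szego (z j) (\<alpha>(k := Suc (\<alpha> k)))) - c * (\<Sum>j<m. b j * szego (z j) \<alpha>)"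
    by (simp add: szego_upd sum_distrib_left sum_subtractf[symmetric] algebra_simps)
  also have "\<dots> = 0" using assms by simp
  finally show "(\<Sum>j<m. b j * (cnj (z j $ k) - c) * szego (z j) \<alpha>) = 0" .
qed

lemma indep:
  assumes "\<And>\<alpha>. E a \<alpha> = 0" and i0: "i0 < m"
  shows "a i0 = 0"
proof -
  define kk where "kk l = (SOME k. z l $ k \<noteq> z i0 $ k)" for l
  have kk: "z l $ kk l \<noteq> z i0 $ kk l" if "l < m" "l \<noteq> i0" for l
  proof -
    have "z l \<noteq> z i0" using zinj that i0 by (auto dest: inj_onD)
    then have "\<exists>k. z l $ k \<noteq> z i0 $ k" by (simp add: vec_eq_iff)
    then show ?thesis unfolding kk_def by (rule someI_ex)
  qed
  define P where "P L j = (\<Prod>l\<in>L. (cnj (z j $ kk l) - cnj (z l $ kk l)))" for L j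
  have claim: "\<forall>\<alpha>. (\<Sum>j<m. a j * P L j * szego (z j) \<alpha>) = 0" if "finite L" for L
    using that
  proof (induction L rule: finite_induct)
    case empty
    then show ?case using assms(1) by (simp add: P_def E_def)
  next
    case (insert l L)
    from indep_step[OF insert.IH, of "kk l" "cnj (z l $ kk l)"]
    show ?case
      using insert.hyps by (simp add: P_def mult_ac)
  qed
  define L where "L = {..<m} - {i0}"
  have fL: "finite L" by (simp add: L_def)
  from claim[OF fL, rule_format, of "\<lambda>_. 0"]
  have s0: "(\<Sum>j<m. a j * P L j) = 0" by (simp add: szego_0)
  have "(\<Sum>j<m. a j * P L j) = a i0 * P L i0 + (\<Sum>j\<in>L. a j * P L j)"
    unfolding L_def using i0 by (simp add: sum.remove)
  moreover have "P L j = 0" if "j \<in> L" for j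
    unfolding P_def using that fL by (auto intro: bexI[of _ j])
  ultimately have aP: "a i0 * P L i0 = 0" using s0 by simp
  have kk2: "z i0 $ kk l \<noteq> z l $ kk l" if "l < m" "l \<noteq> i0" for l
    using kk[OF that] by metis
  have "P L i0 \<noteq> 0"
    unfolding P_def using fL kk2 by (auto simp: L_def)
  with aP show ?thesis by simp
qed

lemma E_zero:
  assumes "\<forall>i<m. (\<Sum>j<m. K i j * a j) = 0"
  shows "E a = (\<lambda>_. 0)"
proof -
  have "G a a = 0" using assms by (simp add: G_def)
  then show ?thesis using G_zero by auto
qed

lemma interp_ex1: "\<exists>!q. q \<in> QZ m z \<and> (\<forall>i<m. ev q (z i) = b i)"
proof -
  have "injK m K"
    unfolding injK_def
  proof (rule allI, rule impI)
    fix a assume "\<forall>i<m. (\<Sum>j<m. K i j * a j) = 0"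
    then have "E a = (\<lambda>_. 0)" by (rule E_zero)
    then show "\<forall>j<m. a j = 0" using indep by auto
  qed
  then have "surjK m K" by (rule solve_sys)
  then obtain a where a: "\<forall>i<m. (\<Sum>j<m. K i j * a j) = b i"
    unfolding surjK_def by blast
  show ?thesis
  proof (rule ex1I[of _ "E a"])
    show "E a \<in> QZ m z \<and> (\<forall>i<m. ev (E a) (z i) = b i)"
      using a by (simp add: QZ_eq ev_E)
  next
    fix q assume q: "q \<in> QZ m z \<and> (\<forall>i<m. ev q (z i) = b i)"
    then obtain c where c: "q = E c" by (auto simp: QZ_eq)
    have "\<forall>i<m. (\<Sum>j<m. K i j * (c j - a j)) = 0"
      using q a by (simp add: c ev_E right_diff_distrib sum_subtractf)
    then have "E (\<lambda>j. c j - a j) = (\<lambda>_. 0)" by (rule E_zero)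
    then show "q = E a" by (simp add: E_diff c fun_eq_iff)
  qed
qed

definition interp :: "(nat \<Rightarrow> complex) \<Rightarrow> 'n coeffs" where
  "interp b = (THE q. q \<in> QZ m z \<and> (\<forall>i<m. ev q (z i) = b i))"

lemma interp: "interp b \<in> QZ m z" "\<And>i. i < m \<Longrightarrow> ev (interp b) (z i) = b i"
  using theI'[OF interp_ex1[of b]] unfolding interp_def by auto

lemma interp_unique: "q \<in> QZ m z \<Longrightarrow> (\<And>i. i < m \<Longrightarrow> ev q (z i) = b i) \<Longrightarrow> q = interp b"
  unfolding interp_def by (rule the1_equality[OF interp_ex1, symmetric]) auto

lemma proj_eq:
  assumes g: "\<And>i. i < m \<Longrightarrow> ((\<lambda>\<alpha>. g \<alpha> * mon (z i) \<alpha>) has_sum e i) UNIV"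
  shows "proj (QZ m z) g = interp e"
proof -
  have key: "h2_inner (\<lambda>\<alpha>. g \<alpha> - E a \<alpha>) (E b) = (\<Sum>i<m. cnj (b i) * (e i - (\<Sum>j<m. K i j * a j)))" for a b
  proof -
    have "((\<lambda>\<alpha>. (g \<alpha> - E a \<alpha>) * cnj (E b \<alpha>)) has_sum (\<Sum>i<m. cnj (b i) * (e i - (\<Sum>j<m. K i j * a j)))) UNIV"
    proof (rule inner_gen)
      fix i assume i: "i < m"
      have "((\<lambda>\<alpha>. g \<alpha> * mon (z i) \<alpha> - E a \<alpha> * mon (z i) \<alpha>) has_sum (e i - (\<Sum>j<m. K i j * a j))) UNIV"
        by (rule has_sum_diff'[OF g[OF i] E_has_sum_z[OF i]])
      then show "((\<lambda>\<alpha>. (g \<alpha> - E a \<alpha>) * mon (z i) \<alpha>) has_sum (e i - (\<Sum>j<m. K i j * a j))) UNIV"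
        by (simp add: left_diff_distrib)
    qed
    then show ?thesis unfolding h2_inner_def by (rule infsumI)
  qed
  have P1: "interp e \<in> QZ m z \<and> (\<forall>k\<in>QZ m z. h2_inner (\<lambda>\<alpha>. g \<alpha> - interp e \<alpha>) k = 0)"
  proof -
    obtain a where a: "interp e = E a" using interp(1)[of e] by (auto simp: QZ_eq)
    have "\<forall>i<m. (\<Sum>j<m. K i j * a j) = e i"
      using interp(2)[of _ e] by (simp add: a ev_E)
    then show ?thesis
      using interp(1)[of e] by (auto simp: QZ_eq a key)
  qed
  have P2: "q = interp e" if q: "q \<in> QZ m z \<and> (\<forall>k\<in>QZ m z. h2_inner (\<lambda>\<alpha>. g \<alpha> - q \<alpha>) k = 0)" for q
  proof -
    obtain a where a: "q = E a" using q by (auto simp: QZ_eq)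
    show "q = interp e"
    proof (rule interp_unique)
      show "q \<in> QZ m z" using q by simp
      fix i assume i: "i < m"
      have "E (\<lambda>j. if j = i then 1 else 0) \<in> QZ m z" by (simp add: QZ_eq)
      with q have "h2_inner (\<lambda>\<alpha>. g \<alpha> - E a \<alpha>) (E (\<lambda>j. if j = i then 1 else 0)) = 0"
        using a by simp
      then have "e i - (\<Sum>j<m. K i j * a j) = 0"
        unfolding key using i by (simp add: sum_delta_cnj)
      then show "ev q (z i) = e i" using i by (simp add: a ev_E)
    qed
  qed
  have ex: "\<exists>!q. q \<in> QZ m z \<and> (\<forall>k\<in>QZ m z. h2_inner (\<lambda>\<alpha>. g \<alpha> - q \<alpha>) k = 0)"
    using P1 P2 by (rule ex1I)
  show ?thesis
    unfolding proj_def by (rule P2) (rule theI'[OF ex])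
qed


lemma ev_has: "q \<in> QZ m z \<Longrightarrow> i < m \<Longrightarrow> ((\<lambda>\<alpha>. q \<alpha> * mon (z i) \<alpha>) has_sum ev q (z i)) UNIV"
  by (auto simp: QZ_eq ev_E intro: E_has_sum_z)

lemma compr_eq:
  assumes "f \<in> QZ m z"
  shows "compr (QZ m z) k f = interp (\<lambda>i. z i $ k * ev f (z i))"
  unfolding compr_def
  by (rule proj_eq, rule toep_has_sum[OF zcoef_has_sum ev_has[OF assms]])

lemma interp_cong: "(\<And>i. i < m \<Longrightarrow> b i = b' i) \<Longrightarrow> interp b = interp b'"
  by (rule interp_unique[OF interp(1)]) (simp add: interp(2))

lemma interp_self: "q \<in> QZ m z \<Longrightarrow> q = interp (\<lambda>i. ev q (z i))"
  by (rule interp_unique) auto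

lemma Q_add: "f \<in> QZ m z \<Longrightarrow> g \<in> QZ m z \<Longrightarrow> (\<lambda>\<alpha>. f \<alpha> + g \<alpha>) \<in> QZ m z"
proof -
  assume "f \<in> QZ m z" "g \<in> QZ m z"
  then obtain a b where "f = E a" "g = E b" by (auto simp: QZ_eq)
  then have "(\<lambda>\<alpha>. f \<alpha> + g \<alpha>) = E (\<lambda>j. a j + b j)"
    by (simp add: E_def fun_eq_iff sum.distrib algebra_simps)
  then show ?thesis by (simp add: QZ_eq)
qed

lemma Q_smult: "f \<in> QZ m z \<Longrightarrow> (\<lambda>\<alpha>. c * f \<alpha>) \<in> QZ m z"
proof -
  assume "f \<in> QZ m z"
  then obtain a where "f = E a" by (auto simp: QZ_eq)
  then have "(\<lambda>\<alpha>. c * f \<alpha>) = E (\<lambda>j. c * a j)"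
    by (simp add: E_def fun_eq_iff sum_distrib_left algebra_simps)
  then show ?thesis by (simp add: QZ_eq)
qed

lemma ev_add: "f \<in> QZ m z \<Longrightarrow> g \<in> QZ m z \<Longrightarrow> i < m \<Longrightarrow>
    ev (\<lambda>\<alpha>. f \<alpha> + g \<alpha>) (z i) = ev f (z i) + ev g (z i)"
  unfolding ev_def
  by (rule infsumI) (simp add: distrib_right has_sum_add ev_has[unfolded ev_def])

lemma ev_smult: "f \<in> QZ m z \<Longrightarrow> i < m \<Longrightarrow> ev (\<lambda>\<alpha>. c * f \<alpha>) (z i) = c * ev f (z i)"
  unfolding ev_def
  by (rule infsumI) (simp add: mult.assoc has_sum_cmult_right ev_has[unfolded ev_def])

lemma G_diff_left: "G (\<lambda>j. a j - b j) c = G a c - G b c"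
  by (simp add: G_def sum_subtractf right_diff_distrib)

lemma G_diff_right: "G a (\<lambda>j. b j - c j) = G a b - G a c"
  by (simp add: G_def sum_subtractf left_diff_distrib)

lemma G_expand:
  "Re (G (\<lambda>j. a j - b j) (\<lambda>j. a j - b j)) = Re (G a a) - 2 * Re (G a b) + Re (G b b)"
proof -
  have "Re (G b a) = Re (G a b)" using G_herm[of b a] by simp
  then show ?thesis by (simp add: G_diff_left G_diff_right)
qed

lemma core:
  assumes "\<forall>i<m. (\<Sum>j<m. K i j * x j) = w i * (\<Sum>j<m. K i j * a j)"
  shows "G x b = G a (\<lambda>j. cnj (w j) * b j)"
  unfolding G_def using assms by (intro sum.cong) (auto simp: mult_ac)

lemma pick_G:
  "(\<Sum>i<m. \<Sum>j<m. cnj (v i) * ((1 - w i * cnj (w j)) * szego_kernel (z i) (z j)) * v j)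
     = G v v - G (\<lambda>j. cnj (w j) * v j) (\<lambda>j. cnj (w j) * v j)"
  by (simp add: G_def K_def sum_distrib_left sum_subtractf[symmetric] algebra_simps)

lemma E_in: "E a \<in> QZ m z" by (simp add: QZ_eq)

lemma clp_imp_pick:
  assumes CL: "commutant_lifting (QZ m z)"
  shows "pick_set m z"
  unfolding pick_set_def
proof (intro allI impI)
  fix w :: "nat \<Rightarrow> complex"
  assume "(\<forall>i<m. cmod (w i) < 1) \<and> pick_psd m z w"
  then have psd: "pick_psd m z w" by simp
  define Q where "Q = QZ m z"
  define X where "X f = interp (\<lambda>i. w i * ev f (z i))" for f
  have XQ: "X f \<in> Q" for f unfolding X_def Q_def by (rule interp(1))
  have Xev: "ev (X f) (z i) = w i * ev f (z i)" if "i < m" for f i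
    unfolding X_def using that by (rule interp(2))
  have contr: "contraction_on Q X"
    unfolding contraction_on_def
  proof (intro conjI ballI allI)
    fix f assume "f \<in> Q" show "X f \<in> Q" by (rule XQ)
  next
    fix f g assume f: "f \<in> Q" and g: "g \<in> Q"
    show "X (\<lambda>\<alpha>. f \<alpha> + g \<alpha>) = (\<lambda>\<alpha>. X f \<alpha> + X g \<alpha>)"
      unfolding X_def
    proof (rule interp_unique[symmetric])
      show "(\<lambda>\<alpha>. interp (\<lambda>i. w i * ev f (z i)) \<alpha> + interp (\<lambda>i. w i * ev g (z i)) \<alpha>) \<in> QZ m z"
        by (intro Q_add interp(1))
      fix i assume i: "i < m"
      show "ev (\<lambda>\<alpha>. interp (\<lambda>i. w i * ev f (z i)) \<alpha> + interp (\<lambda>i. w i * ev g (z i)) \<alpha>) (z i) =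
            w i * ev (\<lambda>\<alpha>. f \<alpha> + g \<alpha>) (z i)"
        using f g i by (simp add: ev_add interp Q_def distrib_left)
    qed
  next
    fix f c assume f: "f \<in> Q"
    show "X (\<lambda>\<alpha>. c * f \<alpha>) = (\<lambda>\<alpha>. c * X f \<alpha>)"
      unfolding X_def
    proof (rule interp_unique[symmetric])
      show "(\<lambda>\<alpha>. c * interp (\<lambda>i. w i * ev f (z i)) \<alpha>) \<in> QZ m z"
        by (intro Q_smult interp(1))
      fix i assume i: "i < m"
      show "ev (\<lambda>\<alpha>. c * interp (\<lambda>i. w i * ev f (z i)) \<alpha>) (z i) = w i * ev (\<lambda>\<alpha>. c * f \<alpha>) (z i)"
        using f i by (simp add: ev_smult interp Q_def mult_ac)
    qed
  next
    fix f assume f: "f \<in> Q"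
    then obtain a where a: "f = E a" by (auto simp: Q_def QZ_eq)
    obtain x where x: "X f = E x" using XQ[of f] by (auto simp: Q_def QZ_eq)
    define y where "y = (\<lambda>j. cnj (w j) * x j)"
    have Kx: "\<forall>i<m. (\<Sum>j<m. K i j * x j) = w i * (\<Sum>j<m. K i j * a j)"
    proof (intro allI impI)
      fix i assume i: "i < m"
      show "(\<Sum>j<m. K i j * x j) = w i * (\<Sum>j<m. K i j * a j)"
        using Xev[OF i, of f] unfolding x by (simp add: a ev_E i)
    qed
    have 1: "G x x = G a y" unfolding y_def by (rule core[OF Kx])
    have "Re (G x x - G y y) \<ge> 0"
      using psd[unfolded pick_psd_def, rule_format, of x] pick_G[of x w] by (simp add: Let_def y_def)
    then have 2: "Re (G y y) \<le> Re (G x x)" by simp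
    have "Re (G (\<lambda>j. a j - y j) (\<lambda>j. a j - y j)) \<ge> 0" by (rule G_norm(3))
    then have "Re (G a a) - 2 * Re (G x x) + Re (G y y) \<ge> 0" unfolding G_expand 1 .
    with 2 have "Re (G x x) \<le> Re (G a a)" by linarith
    then show "h2_norm (X f) \<le> h2_norm f"
      unfolding x unfolding a G_norm(4) by simp
  qed
  have comm: "\<forall>k. \<forall>f\<in>Q. X (compr Q k f) = compr Q k (X f)"
  proof (intro allI ballI)
    fix k f assume f: "f \<in> Q"
    have "X (compr Q k f) = interp (\<lambda>i. w i * (z i $ k * ev f (z i)))"
      unfolding X_def Q_def compr_eq[OF f[unfolded Q_def]]
      by (rule interp_cong) (simp add: interp(2))
    also have "\<dots> = compr Q k (X f)"
      unfolding Q_def compr_eq[OF XQ[unfolded Q_def]]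
      by (rule interp_cong) (simp add: Xev)
    finally show "X (compr Q k f) = compr Q k (X f)" .
  qed
  from CL[unfolded commutant_lifting_def, rule_format, of X] contr comm
  obtain \<phi> c where \<phi>: "schur \<phi>" "pw_series c \<phi>" and XT: "\<forall>f\<in>Q. X f = proj Q (toep c f)"
    unfolding Q_def by blast
  show "\<exists>\<phi>. schur \<phi> \<and> (\<forall>i<m. \<phi> (z i) = w i)"
  proof (intro exI conjI allI impI)
    show "schur \<phi>" by (rule \<phi>(1))
    fix i assume i: "i < m"
    define e where "e = interp (\<lambda>j. if j = i then 1 else 0)"
    have eQ: "e \<in> QZ m z" unfolding e_def by (rule interp(1))
    have eev: "ev e (z l) = (if l = i then 1 else 0)" if "l < m" for l
      unfolding e_def using that by (rule interp(2))
    have "X e = proj Q (toep c e)" using XT eQ Q_def by blast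
    also have "\<dots> = interp (\<lambda>l. \<phi> (z l) * ev e (z l))"
      unfolding Q_def
    proof (rule proj_eq)
      fix l assume l: "l < m"
      have "((\<lambda>\<beta>. c \<beta> * mon (z l) \<beta>) has_sum \<phi> (z l)) UNIV"
        using \<phi>(2) zin[OF l] unfolding pw_series_def by blast
      then show "((\<lambda>\<alpha>. toep c e \<alpha> * mon (z l) \<alpha>) has_sum \<phi> (z l) * ev e (z l)) UNIV"
        by (rule toep_has_sum[OF _ ev_has[OF eQ l]])
    qed
    finally have "ev (X e) (z i) = \<phi> (z i) * ev e (z i)" using i by (simp add: interp(2))
    then show "\<phi> (z i) = w i" using Xev[OF i, of e] eev[OF i] by simp
  qed
qed


lemma Q_zero: "(\<lambda>_. 0) \<in> QZ m z"
proof -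
  have "(\<lambda>_. 0) = E (\<lambda>_. 0)" by (simp add: E_def fun_eq_iff)
  then show ?thesis by (simp add: QZ_eq)
qed

lemma Q_sum: "finite L \<Longrightarrow> (\<And>l. l \<in> L \<Longrightarrow> g l \<in> QZ m z) \<Longrightarrow> (\<lambda>\<alpha>. \<Sum>l\<in>L. c l * g l \<alpha>) \<in> QZ m z"
proof (induction L rule: finite_induct)
  case empty then show ?case using Q_zero by simp
next
  case (insert l L)
  then show ?case by (simp add: Q_add Q_smult)
qed

lemma ev_sum:
  assumes "finite L" "\<And>l. l \<in> L \<Longrightarrow> g l \<in> QZ m z" "i < m"
  shows "ev (\<lambda>\<alpha>. \<Sum>l\<in>L. c l * g l \<alpha>) (z i) = (\<Sum>l\<in>L. c l * ev (g l) (z i))"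
proof -
  have "((\<lambda>\<alpha>. \<Sum>l\<in>L. c l * (g l \<alpha> * mon (z i) \<alpha>)) has_sum (\<Sum>l\<in>L. c l * ev (g l) (z i))) UNIV"
    by (rule has_sum_sum_fin[OF assms(1)]) (auto intro!: has_sum_cmult_right ev_has assms)
  then show ?thesis unfolding ev_def
    by (intro infsumI) (simp add: sum_distrib_right mult.assoc)
qed

lemma sum_delta_m:
  assumes "a < m"
  shows "(\<Sum>j<m. f j * (if j = a then 1 else 0)) = (f a :: complex)"
proof -
  have "(\<Sum>j<m. f j * (if j = a then 1 else 0)) = (\<Sum>j<m. if j = a then f j else 0)"
    by (rule sum.cong) auto
  then show ?thesis using assms by simp
qed

lemma quad1:
  assumes "a < m"
  shows "(\<Sum>i<m. \<Sum>j<m. cnj ((\<lambda>l. if l = a then 1 else 0) i) * P i j * (\<lambda>l. if l = a then 1 else 0) j) = (P a a :: complex)"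
proof -
  have "(\<Sum>j<m. cnj (if i = a then 1 else 0) * P i j * (if j = a then 1 else 0)) = cnj (if i = a then 1 else 0) * P i a" for i
    using sum_delta_m[OF assms, of "\<lambda>j. cnj (if i = a then 1 else 0) * P i j"] by simp
  then have "(\<Sum>i<m. \<Sum>j<m. cnj ((\<lambda>l. if l = a then 1 else 0) i) * P i j * (\<lambda>l. if l = a then 1 else 0) j)
      = (\<Sum>i<m. P i a * (if i = a then 1 else 0))"
    by (intro sum.cong) (auto simp: mult.commute)
  then show ?thesis using sum_delta_m[OF assms, of "\<lambda>i. P i a"] by simp
qed

lemma mult_if0: "x * (if Q then y else 0) = (if Q then x * y else (0::complex))"
  by simp

lemma cnj_if01: "cnj (if Q then (1::complex) else 0) = (if Q then 1 else 0)"
  by simp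

lemma quad2:
  assumes "a < m" "b < m" "a \<noteq> b"
  shows "(\<Sum>i<m. \<Sum>j<m. cnj ((\<lambda>l. if l = a then t else if l = b then 1 else 0) i) * P i j *
            (\<lambda>l. if l = a then t else if l = b then 1 else 0) j)
         = cnj t * P a a * t + cnj t * P a b + P b a * t + (P b b :: complex)"
proof -
  define v where "v = (\<lambda>l. if l = a then t else if l = b then 1 else (0::complex))"
  have vv: "v l = t * (if l = a then 1 else 0) + (if l = b then 1 else 0)" for l
    using assms by (simp add: v_def)
  have inner: "(\<Sum>j<m. cnj (v i) * P i j * v j) = cnj (v i) * (P i a * t + P i b)" for i
  proof -
    have "(\<Sum>j<m. cnj (v i) * P i j * v j) =
          (\<Sum>j<m. (cnj (v i) * P i j * t) * (if j = a then 1 else 0)) + (\<Sum>j<m. (cnj (v i) * P i j) * (if j = b then 1 else 0))"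
      unfolding vv by (simp add: sum.distrib[symmetric] algebra_simps)
    also have "\<dots> = cnj (v i) * (P i a * t + P i b)"
      using assms by (simp add: mult_if0 algebra_simps)
    finally show ?thesis .
  qed
  have "(\<Sum>i<m. \<Sum>j<m. cnj (v i) * P i j * v j) = (\<Sum>i<m. cnj (v i) * (P i a * t + P i b))"
    using inner by simp
  also have "\<dots> = (\<Sum>i<m. (cnj t * (P i a * t + P i b)) * (if i = a then 1 else 0) + (P i a * t + P i b) * (if i = b then 1 else 0))"
    using assms by (intro sum.cong) (auto simp: v_def)
  also have "\<dots> = (\<Sum>i<m. (cnj t * (P i a * t + P i b)) * (if i = a then 1 else 0)) + (\<Sum>i<m. (P i a * t + P i b) * (if i = b then 1 else 0))"
    by (rule sum.distrib)
  also have "\<dots> = cnj t * (P a a * t + P a b) + (P b a * t + P b b)"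
    using assms by (simp only: sum_delta_m)
  also have "\<dots> = cnj t * P a a * t + cnj t * P a b + P b a * t + P b b"
    by (simp add: algebra_simps)
  finally show ?thesis unfolding v_def .
qed

lemma kern_nz: "i < m \<Longrightarrow> j < m \<Longrightarrow> szego_kernel (z i) (z j) \<noteq> 0"
proof -
  assume i: "i < m" and j: "j < m"
  have "1 - z i $ k * cnj (z j $ k) \<noteq> 0" for k
  proof
    assume "1 - z i $ k * cnj (z j $ k) = 0"
    then have "norm (z i $ k * cnj (z j $ k)) = 1" by (metis eq_iff_diff_eq_0 norm_one)
    moreover have "norm (z i $ k * cnj (z j $ k)) < 1"
    proof -
      have "norm (z i $ k * cnj (z j $ k)) = norm (z i $ k) * norm (z j $ k)" by (simp add: norm_mult)
      also have "\<dots> \<le> 1 * norm (z j $ k)"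
        using polydiscD[OF zin[OF i], of k] by (intro mult_right_mono) auto
      also have "\<dots> < 1" using polydiscD[OF zin[OF j], of k] by simp
      finally show ?thesis .
    qed
    ultimately show False by simp
  qed
  then show ?thesis by (simp add: szego_kernel_def)
qed

lemma kern_cnj: "cnj (szego_kernel u v) = szego_kernel v u"
  by (simp add: szego_kernel_def mult.commute)

lemma X_sum:
  assumes C: "contraction_on (QZ m z) X"
  shows "finite L \<Longrightarrow> (\<And>l. l \<in> L \<Longrightarrow> g l \<in> QZ m z) \<Longrightarrow>
         X (\<lambda>\<alpha>. \<Sum>l\<in>L. c l * g l \<alpha>) = (\<lambda>\<alpha>. \<Sum>l\<in>L. c l * X (g l) \<alpha>)"
proof (induction L rule: finite_induct)
  case empty
  have h: "\<forall>f\<in>QZ m z. \<forall>a. X (\<lambda>\<alpha>. a * f \<alpha>) = (\<lambda>\<alpha>. a * X f \<alpha>)"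
    using C unfolding contraction_on_def by blast
  from h[rule_format, OF Q_zero, of 0] show ?case by simp
next
  case (insert l L)
  have gl: "g l \<in> QZ m z" using insert by simp
  have sL: "(\<lambda>\<alpha>. \<Sum>l\<in>L. c l * g l \<alpha>) \<in> QZ m z" using insert by (intro Q_sum) auto
  have cg: "(\<lambda>\<alpha>. c l * g l \<alpha>) \<in> QZ m z" using gl by (rule Q_smult)
  have "X (\<lambda>\<alpha>. \<Sum>l\<in>insert l L. c l * g l \<alpha>) = X (\<lambda>\<alpha>. (\<lambda>\<alpha>. c l * g l \<alpha>) \<alpha> + (\<lambda>\<alpha>. \<Sum>l\<in>L. c l * g l \<alpha>) \<alpha>)"
    using insert.hyps by simp
  also have "\<dots> = (\<lambda>\<alpha>. X (\<lambda>\<alpha>. c l * g l \<alpha>) \<alpha> + X (\<lambda>\<alpha>. \<Sum>l\<in>L. c l * g l \<alpha>) \<alpha>)"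
  proof -
    have h: "\<forall>f\<in>QZ m z. \<forall>g\<in>QZ m z. X (\<lambda>\<alpha>. f \<alpha> + g \<alpha>) = (\<lambda>\<alpha>. X f \<alpha> + X g \<alpha>)"
      using C unfolding contraction_on_def by blast
    from h[rule_format, OF cg sL] show ?thesis .
  qed
  also have "X (\<lambda>\<alpha>. c l * g l \<alpha>) = (\<lambda>\<alpha>. c l * X (g l) \<alpha>)"
    using C gl unfolding contraction_on_def by blast
  finally show ?case using insert by simp
qed

lemma final_match:
  assumes pw: "pw_series c \<phi>" and phw: "\<And>i. i < m \<Longrightarrow> \<phi> (z i) = w i"
    and XQ: "\<And>f. f \<in> QZ m z \<Longrightarrow> X f \<in> QZ m z"
    and evX: "\<And>f i. f \<in> QZ m z \<Longrightarrow> i < m \<Longrightarrow> ev (X f) (z i) = w i * ev f (z i)"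
  shows "\<forall>f\<in>QZ m z. X f = proj (QZ m z) (toep c f)"
proof
  fix f assume f: "f \<in> QZ m z"
  have "proj (QZ m z) (toep c f) = interp (\<lambda>i. \<phi> (z i) * ev f (z i))"
  proof (rule proj_eq)
    fix l assume l: "l < m"
    have "((\<lambda>\<beta>. c \<beta> * mon (z l) \<beta>) has_sum \<phi> (z l)) UNIV"
      using pw zin[OF l] unfolding pw_series_def by blast
    then show "((\<lambda>\<alpha>. toep c f \<alpha> * mon (z l) \<alpha>) has_sum \<phi> (z l) * ev f (z l)) UNIV"
      by (rule toep_has_sum[OF _ ev_has[OF f l]])
  qed
  also have "\<dots> = interp (\<lambda>i. ev (X f) (z i))"
    by (rule interp_cong) (simp add: phw evX f)
  also have "\<dots> = X f" by (rule interp_self[symmetric]) (rule XQ[OF f])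
  finally show "X f = proj (QZ m z) (toep c f)" ..
qed

lemma pick_imp_clp:
  assumes PS: "pick_set m z"
  shows "commutant_lifting (QZ m z)"
  unfolding commutant_lifting_def
proof (intro allI impI)
  fix X assume H: "contraction_on (QZ m z) X \<and> (\<forall>k. \<forall>f\<in>QZ m z. X (compr (QZ m z) k f) = compr (QZ m z) k (X f))"
  then have C: "contraction_on (QZ m z) X" by simp
  have comm: "\<And>k f. f \<in> QZ m z \<Longrightarrow> X (compr (QZ m z) k f) = compr (QZ m z) k (X f)" using H by blast
  have XQ: "\<And>f. f \<in> QZ m z \<Longrightarrow> X f \<in> QZ m z" using C unfolding contraction_on_def by blast
  have Xsm: "\<And>f c. f \<in> QZ m z \<Longrightarrow> X (\<lambda>\<alpha>. c * f \<alpha>) = (\<lambda>\<alpha>. c * X f \<alpha>)"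
    using C unfolding contraction_on_def by blast
  have Xn: "\<And>f. f \<in> QZ m z \<Longrightarrow> h2_norm (X f) \<le> h2_norm f"
    using C unfolding contraction_on_def by blast
  define ee where "ee l = interp (\<lambda>j. if j = l then 1 else 0)" for l
  have eeQ: "ee l \<in> QZ m z" for l unfolding ee_def by (rule interp(1))
  have eeev: "ev (ee l) (z i) = (if i = l then 1 else 0)" if "i < m" for i l
    unfolding ee_def using that by (rule interp(2))
  define M where "M i l = ev (X (ee l)) (z i)" for i l
  have decomp: "f = (\<lambda>\<alpha>. \<Sum>l<m. ev f (z l) * ee l \<alpha>)" if f: "f \<in> QZ m z" for f
  proof -
    have "(\<lambda>\<alpha>. \<Sum>l<m. ev f (z l) * ee l \<alpha>) = interp (\<lambda>i. ev f (z i))"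
    proof (rule interp_unique)
      show "(\<lambda>\<alpha>. \<Sum>l<m. ev f (z l) * ee l \<alpha>) \<in> QZ m z" by (rule Q_sum) (auto intro: eeQ)
      fix i assume i: "i < m"
      have "ev (\<lambda>\<alpha>. \<Sum>l<m. ev f (z l) * ee l \<alpha>) (z i) = (\<Sum>l<m. ev f (z l) * ev (ee l) (z i))"
        by (rule ev_sum) (auto intro: eeQ i)
      also have "\<dots> = (\<Sum>l<m. ev f (z l) * (if l = i then 1 else 0))"
        using i by (intro sum.cong) (auto simp: eeev)
      also have "\<dots> = ev f (z i)" using i by (rule sum_delta_m)
      finally show "ev (\<lambda>\<alpha>. \<Sum>l<m. ev f (z l) * ee l \<alpha>) (z i) = ev f (z i)" .
    qed
    then show ?thesis using interp_self[OF f] by simp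
  qed
  have offdiag: "M i l = 0" if i: "i < m" and l: "l < m" and il: "i \<noteq> l" for i l
  proof -
    have ceq: "compr (QZ m z) k (ee l) = (\<lambda>\<alpha>. z l $ k * ee l \<alpha>)" for k
    proof -
      have "compr (QZ m z) k (ee l) = interp (\<lambda>i. z i $ k * ev (ee l) (z i))"
        by (rule compr_eq[OF eeQ])
      also have "\<dots> = (\<lambda>\<alpha>. z l $ k * ee l \<alpha>)"
        by (rule interp_unique[symmetric]) (auto intro: Q_smult eeQ simp: ev_smult eeQ eeev)
      finally show ?thesis .
    qed
    have "z i \<noteq> z l" using zinj i l il by (auto dest: inj_onD)
    then obtain k where k: "z i $ k \<noteq> z l $ k" by (auto simp: vec_eq_iff)
    have "X (compr (QZ m z) k (ee l)) = (\<lambda>\<alpha>. z l $ k * X (ee l) \<alpha>)"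
      unfolding ceq by (rule Xsm[OF eeQ])
    then have e1: "ev (X (compr (QZ m z) k (ee l))) (z i) = z l $ k * M i l"
      unfolding M_def using i by (simp add: ev_smult XQ eeQ)
    have e2: "ev (compr (QZ m z) k (X (ee l))) (z i) = z i $ k * M i l"
      unfolding M_def compr_eq[OF XQ[OF eeQ]] using i by (simp add: interp(2))
    have "z l $ k * M i l = ev (X (compr (QZ m z) k (ee l))) (z i)" using e1 by simp
    also have "\<dots> = ev (compr (QZ m z) k (X (ee l))) (z i)" by (simp only: comm[OF eeQ])
    also have "\<dots> = z i $ k * M i l" by (rule e2)
    finally have "z l $ k * M i l = z i $ k * M i l" .
    then have "(z i $ k - z l $ k) * M i l = 0"
      by (simp only: left_diff_distrib right_minus_eq)
    then show "M i l = 0" using k by simp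
  qed
  define w where "w i = M i i" for i
  have evX: "ev (X f) (z i) = w i * ev f (z i)" if f: "f \<in> QZ m z" and i: "i < m" for f i
  proof -
    have "X f = X (\<lambda>\<alpha>. \<Sum>l<m. ev f (z l) * ee l \<alpha>)"
      using arg_cong[OF decomp[OF f], of X] .
    also have "\<dots> = (\<lambda>\<alpha>. \<Sum>l<m. ev f (z l) * X (ee l) \<alpha>)"
      by (rule X_sum[OF C]) (auto intro: eeQ)
    finally have "X f = (\<lambda>\<alpha>. \<Sum>l<m. ev f (z l) * X (ee l) \<alpha>)" .
    then have "ev (X f) (z i) = (\<Sum>l<m. ev f (z l) * M i l)"
      unfolding M_def using i by (simp add: ev_sum XQ eeQ)
    also have "\<dots> = (\<Sum>l<m. (ev f (z l) * M i l) * (if l = i then 1 else 0))"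
      using offdiag[OF i] by (intro sum.cong) auto
    also have "\<dots> = ev f (z i) * M i i" by (rule sum_delta_m[OF i])
    also have "\<dots> = w i * ev f (z i)" by (simp add: w_def)
    finally show ?thesis .
  qed
  define P where "P i j = (1 - w i * cnj (w j)) * szego_kernel (z i) (z j)" for i j
  have psd: "pick_psd m z w"
    unfolding pick_psd_def Let_def
  proof (intro allI conjI)
    fix v :: "nat \<Rightarrow> complex"
    define y where "y = (\<lambda>j. cnj (w j) * v j)"
    obtain u where u: "X (E y) = E u" using XQ[OF E_in[of y]] by (auto simp: QZ_eq)
    have Ku: "\<forall>i<m. (\<Sum>j<m. K i j * u j) = w i * (\<Sum>j<m. K i j * y j)"
    proof (intro allI impI)
      fix i assume i: "i < m"
      show "(\<Sum>j<m. K i j * u j) = w i * (\<Sum>j<m. K i j * y j)"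
        using evX[OF E_in i, of y] unfolding u using i by (simp add: ev_E)
    qed
    have Guv: "G u v = G y y" using core[OF Ku, of v] by (simp add: y_def)
    have "sqrt (Re (G u u)) \<le> sqrt (Re (G y y))"
      using Xn[OF E_in[of y]] unfolding u by (simp add: G_norm(4))
    then have nu: "Re (G u u) \<le> Re (G y y)" by simp
    have "Re (G (\<lambda>j. v j - u j) (\<lambda>j. v j - u j)) \<ge> 0" by (rule G_norm(3))
    then have "Re (G v v) - 2 * Re (G v u) + Re (G u u) \<ge> 0" unfolding G_expand .
    moreover have "Re (G v u) = Re (G y y)" using G_herm[of v u] Guv by simp
    ultimately have "Re (G v v) - Re (G y y) \<ge> 0" using nu by linarith
    then show "Re (\<Sum>i<m. \<Sum>j<m. cnj (v i) * ((1 - w i * cnj (w j)) * szego_kernel (z i) (z j)) * v j) \<ge> 0"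
      unfolding pick_G y_def by simp
    show "Im (\<Sum>i<m. \<Sum>j<m. cnj (v i) * ((1 - w i * cnj (w j)) * szego_kernel (z i) (z j)) * v j) = 0"
      unfolding pick_G by (simp add: G_norm(2))
  qed
  have psdP: "Re (\<Sum>i<m. \<Sum>j<m. cnj (v i) * P i j * v j) \<ge> 0" for v
    using psd unfolding pick_psd_def Let_def P_def by (simp add: mult.assoc)
  have Pherm: "P j i = cnj (P i j)" for i j
    by (simp add: P_def kern_cnj)
  have wle: "cmod (w i) \<le> 1" if i: "i < m" for i
  proof -
    have "Re (P i i) \<ge> 0" using psdP[of "\<lambda>l. if l = i then 1 else 0"] quad1[OF i, of P] by simp
    moreover have "P i i = (1 - of_real ((cmod (w i))\<^sup>2)) * szego_kernel (z i) (z i)"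
      by (simp only: P_def complex_norm_square)
    moreover have "szego_kernel (z i) (z i) = of_real (\<Prod>k\<in>UNIV. inverse (1 - (cmod (z i $ k))\<^sup>2))"
      by (simp add: szego_kernel_def complex_norm_square[symmetric])
    moreover have "(\<Prod>k\<in>UNIV. inverse (1 - (cmod (z i $ k))\<^sup>2)) > 0"
    proof (rule prod_pos)
      fix k :: 'n
      have "cmod (z i $ k) < 1" by (rule polydiscD[OF zin[OF i]])
      then have "(cmod (z i $ k))\<^sup>2 < 1" by (simp add: power_less_one_iff abs_square_less_1)
      then show "0 < inverse (1 - (cmod (z i $ k))\<^sup>2)" by simp
    qed
    ultimately have "(1 - (cmod (w i))\<^sup>2) * (\<Prod>k\<in>UNIV. inverse (1 - (cmod (z i $ k))\<^sup>2)) \<ge> 0"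
      by (simp del: of_real_prod)
    then have "1 - (cmod (w i))\<^sup>2 \<ge> 0"
      using \<open>(\<Prod>k\<in>UNIV. inverse (1 - (cmod (z i $ k))\<^sup>2)) > 0\<close> by (simp add: zero_le_mult_iff)
    then show ?thesis by (simp add: abs_square_le_1)
  qed
  have XT: "\<exists>\<phi> c. schur \<phi> \<and> pw_series c \<phi> \<and> (\<forall>f\<in>QZ m z. X f = proj (QZ m z) (toep c f))"
  proof (cases "\<forall>i<m. cmod (w i) < 1")
    case True
    then obtain \<phi> where \<phi>: "schur \<phi>" "\<forall>i<m. \<phi> (z i) = w i"
      using PS psd unfolding pick_set_def by blast
    then obtain c where c: "pw_series c \<phi>" unfolding schur_def by blast
    have "\<forall>f\<in>QZ m z. X f = proj (QZ m z) (toep c f)"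
      by (rule final_match[OF c _ XQ evX]) (use \<phi> in auto)
    then show ?thesis using \<phi> c by blast
  next
    case False
    then obtain a where a: "a < m" "cmod (w a) \<ge> 1" by (auto simp: not_less)
    with wle have wa: "cmod (w a) = 1" by (simp add: antisym)
    have allw: "w b = w a" if b: "b < m" for b
    proof (cases "b = a")
      case True then show ?thesis by simp
    next
      case False
      have Paa: "P a a = 0"
        using wa by (simp add: P_def complex_norm_square[symmetric])
      define p where "p = P a b"
      have Pba: "P b a = cnj p" unfolding p_def by (rule Pherm)
      have ineq: "Re (cnj t * p + cnj p * t + P b b) \<ge> 0" for t
        using psdP[of "\<lambda>l. if l = a then t else if l = b then 1 else 0"] quad2[OF a(1) b False[symmetric], of t P]
        by (simp add: Paa Pba p_def)
      have "p = 0"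
      proof (rule ccontr)
        assume pnz: "p \<noteq> 0"
        define r where "r = (\<bar>Re (P b b)\<bar> + 1) / (2 * (cmod p)\<^sup>2)"
        have np: "(cmod p)\<^sup>2 > 0" using pnz by simp
        have pp: "p * cnj p = of_real ((cmod p)\<^sup>2)" by (rule complex_norm_square[symmetric])
        have "cnj (- of_real r * p) * p = - (of_real r * (p * cnj p))" by (simp add: mult_ac)
        then have e1: "cnj (- of_real r * p) * p = - of_real (r * (cmod p)\<^sup>2)"
          by (simp only: pp of_real_mult)
        have "cnj p * (- of_real r * p) = - (of_real r * (p * cnj p))" by (simp add: mult_ac)
        then have e2: "cnj p * (- of_real r * p) = - of_real (r * (cmod p)\<^sup>2)"
          by (simp only: pp of_real_mult)
        have "r * (cmod p)\<^sup>2 = (\<bar>Re (P b b)\<bar> + 1) / 2" unfolding r_def using np by simp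
        then have "Re (cnj (- of_real r * p) * p + cnj p * (- of_real r * p) + P b b) < 0"
          unfolding e1 e2 by simp
        with ineq[of "- of_real r * p"] show False by simp
      qed
      then have "(1 - w a * cnj (w b)) * szego_kernel (z a) (z b) = 0" by (simp add: p_def P_def)
      then have "w a * cnj (w b) = 1" using kern_nz[OF a(1) b] by simp
      moreover have "w a * cnj (w a) = 1" using wa by (simp add: complex_norm_square[symmetric])
      ultimately have "w a * (cnj (w b) - cnj (w a)) = 0" by (simp add: right_diff_distrib)
      moreover have "w a \<noteq> 0" using wa by auto
      ultimately have "cnj (w b) = cnj (w a)" by simp
      then show ?thesis by simp
    qed
    define c :: "'n coeffs" where "c \<alpha> = (if \<alpha> = (\<lambda>_. 0) then w a else 0)" for \<alpha>
    have pw: "pw_series c (\<lambda>_. w a)"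
      unfolding pw_series_def
    proof
      fix u :: "complex ^ 'n" assume "u \<in> polydisc"
      show "((\<lambda>\<alpha>. c \<alpha> * mon u \<alpha>) has_sum w a) UNIV"
        by (rule has_sum_finite_neutralI[of "{\<lambda>_. 0}"]) (auto simp: c_def mon_def)
    qed
    have sch: "schur (\<lambda>_::complex ^ 'n. w a)" unfolding schur_def using pw wa by auto
    have "\<forall>f\<in>QZ m z. X f = proj (QZ m z) (toep c f)"
      by (rule final_match[OF pw _ XQ evX]) (simp add: allw)
    then show ?thesis using sch pw by blast
  qed
  then show "\<exists>\<phi> c. schur \<phi> \<and> pw_series c \<phi> \<and> (\<forall>f\<in>QZ m z. X f = proj (QZ m z) (toep c f))" .
qed

end

theorem proposition10p5:
  fixes z :: "nat \<Rightarrow> complex ^ 'n" and m :: nat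
  assumes "inj_on z {..<m}" and "\<forall>i<m. z i \<in> polydisc"
  shows "pick_set m z \<longleftrightarrow> commutant_lifting (QZ m z)"
proof -
  interpret pk m z using assms by unfold_locales auto
  show ?thesis using clp_imp_pick pick_imp_clp by blast
qed

end
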